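(* Let $G_1,G_2$ be connected infinite graphs with vertex degrees uniformly bounded, which are quasi-isometric. If $G_2$ is weighted hyperfinite, then so is $G_1$.
   Context: $G_1$ and $G_2$ are quasi-isometric if there is a map $\iota:V(G_1)\to V(G_2)$ and a constant $c>0$ such that $c^{-1}d_{G_1}(x,y)-c\le d_{G_2}(\iota(x),\iota(y))\le c\,d_{G_1}(x,y)+c$ for all $x,y\in V(G_1)$, and every $z\in V(G_2)$ is within $d_{G_2}$-distance $c$ of $\iota(V(G_1))$; here $d_{G_i}$ are the graph (shortest path) metrics. A connected infinite bounded-degree graph $G$ is weighted hyperfinite if for every $\epsilon>0$ there is $K_\epsilon>0$ such that for every finite induced subgraph $L\subseteq G$ and every $w:V(L)\to[0,\infty)$ there is $M\subseteq V(L)$ with $\sum_{x\in M}w(x)\le\epsilon\sum_{x\in V(L)}w(x)$ such that every connected component of $L$ with $M$ deleted has at most $K_\epsilon$ vertices. *)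

theory Defs
  imports Main "HOL-Library.Extended_Real" Complex_Main
begin

definition is_graph :: "'a set \<Rightarrow> ('a \<Rightarrow> 'a \<Rightarrow> bool) \<Rightarrow> bool" where
  "is_graph V E \<longleftrightarrow> (\<forall>x y. E x y \<longrightarrow> x \<in> V \<and> y \<in> V \<and> E y x) \<and> (\<forall>x. \<not> E x x)"

definition walk_in :: "'a set \<Rightarrow> ('a \<Rightarrow> 'a \<Rightarrow> bool) \<Rightarrow> 'a list \<Rightarrow> bool" where
  "walk_in S E xs \<longleftrightarrow> xs \<noteq> [] \<and> set xs \<subseteq> S \<and>
     (\<forall>i. Suc i < length xs \<longrightarrow> E (xs ! i) (xs ! Suc i))"

definition reach_in :: "'a set \<Rightarrow> ('a \<Rightarrow> 'a \<Rightarrow> bool) \<Rightarrow> 'a \<Rightarrow> 'a \<Rightarrow> bool" where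
  "reach_in S E x y \<longleftrightarrow> (\<exists>xs. walk_in S E xs \<and> hd xs = x \<and> last xs = y)"

definition gdist :: "'a set \<Rightarrow> ('a \<Rightarrow> 'a \<Rightarrow> bool) \<Rightarrow> 'a \<Rightarrow> 'a \<Rightarrow> nat" where
  "gdist V E x y = (LEAST n. \<exists>xs. walk_in V E xs \<and> hd xs = x \<and> last xs = y \<and> length xs = Suc n)"

definition connected_graph :: "'a set \<Rightarrow> ('a \<Rightarrow> 'a \<Rightarrow> bool) \<Rightarrow> bool" where
  "connected_graph V E \<longleftrightarrow> (\<forall>x\<in>V. \<forall>y\<in>V. reach_in V E x y)"

definition bounded_degree :: "'a set \<Rightarrow> ('a \<Rightarrow> 'a \<Rightarrow> bool) \<Rightarrow> bool" where
  "bounded_degree V E \<longleftrightarrow> (\<exists>D::nat. \<forall>x\<in>V. finite {y. E x y} \<and> card {y. E x y} \<le> D)"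

definition quasi_isometric ::
  "'a set \<Rightarrow> ('a \<Rightarrow> 'a \<Rightarrow> bool) \<Rightarrow> 'b set \<Rightarrow> ('b \<Rightarrow> 'b \<Rightarrow> bool) \<Rightarrow> bool" where
  "quasi_isometric V1 E1 V2 E2 \<longleftrightarrow>
    (\<exists>(\<iota>::'a \<Rightarrow> 'b) (c::real). c > 0 \<and> \<iota> ` V1 \<subseteq> V2 \<and>
      (\<forall>x\<in>V1. \<forall>y\<in>V1.
         real (gdist V1 E1 x y) / c - c \<le> real (gdist V2 E2 (\<iota> x) (\<iota> y)) \<and>
         real (gdist V2 E2 (\<iota> x) (\<iota> y)) \<le> c * real (gdist V1 E1 x y) + c) \<and>
      (\<forall>z\<in>V2. \<exists>x\<in>V1. real (gdist V2 E2 z (\<iota> x)) \<le> c))"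

text \<open>Weighted hyperfiniteness: finite induced subgraphs are given by finite vertex sets
  L \<subseteq> V; the components of L with M deleted are the reachability classes inside L - M.\<close>
definition weighted_hyperfinite :: "'a set \<Rightarrow> ('a \<Rightarrow> 'a \<Rightarrow> bool) \<Rightarrow> bool" where
  "weighted_hyperfinite V E \<longleftrightarrow>
    (\<forall>\<epsilon>::real. \<epsilon> > 0 \<longrightarrow> (\<exists>K::real. K > 0 \<and>
      (\<forall>L w. finite L \<and> L \<subseteq> V \<and> (\<forall>x\<in>L. w x \<ge> (0::real)) \<longrightarrow>
        (\<exists>M\<subseteq>L. sum w M \<le> \<epsilon> * sum w L \<and>
           (\<forall>x\<in>L - M. real (card {y. reach_in (L - M) E x y}) \<le> K)))))"

end

theory Submission
  imports Defs
begin

fun Rset :: "('a \<Rightarrow> 'a \<Rightarrow> bool) \<Rightarrow> 'a \<Rightarrow> nat \<Rightarrow> 'a set" where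
  "Rset E a 0 = {a}"
| "Rset E a (Suc n) = Rset E a n \<union> (\<Union>y\<in>Rset E a n. {z. E y z})"

lemma Rset_mono: "m \<le> n \<Longrightarrow> Rset E a m \<subseteq> Rset E a n"
  by (induction n) (auto simp: le_Suc_eq)

lemma Rset_step: "E x y \<Longrightarrow> Rset E y n \<subseteq> Rset E x (Suc n)"
proof (induction n)
  case 0 then show ?case by auto
next
  case (Suc n)
  then show ?case by (simp only: Rset.simps) blast
qed

lemma Rset_card:
  assumes g: "is_graph V E" and a: "a \<in> V" and D: "\<forall>x\<in>V. finite {y. E x y} \<and> card {y. E x y} \<le> D"
  shows "Rset E a n \<subseteq> V \<and> finite (Rset E a n) \<and> card (Rset E a n) \<le> (D+1)^n"
proof (induction n)
  case 0 then show ?case using a by simp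
next
  case (Suc n)
  let ?A = "Rset E a n"
  have sub: "(\<Union>y\<in>?A. {z. E y z}) \<subseteq> V" using g Suc unfolding is_graph_def by blast
  have fin: "finite (\<Union>y\<in>?A. {z. E y z})" using Suc D by blast
  have "card (\<Union>y\<in>?A. {z. E y z}) \<le> (\<Sum>y\<in>?A. card {z. E y z})" by (rule card_UN_le) (use Suc in auto)
  also have "\<dots> \<le> (\<Sum>y\<in>?A. D)" by (rule sum_mono) (use Suc D in auto)
  also have "\<dots> = card ?A * D" by simp
  finally have c1: "card (\<Union>y\<in>?A. {z. E y z}) \<le> card ?A * D" .
  have "card (Rset E a (Suc n)) \<le> card ?A + card (\<Union>y\<in>?A. {z. E y z})"
    by (simp add: card_Un_le)
  also have "\<dots> \<le> card ?A * (D+1)" using c1 by simp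
  also have "\<dots> \<le> (D+1)^n * (D+1)" using Suc by (intro mult_right_mono) auto
  finally show ?case using Suc sub fin by (simp add: mult.commute)
qed

lemma walk_ne: "walk_in S E xs \<Longrightarrow> xs \<noteq> []"
  unfolding walk_in_def by blast

lemma walk_set: "walk_in S E xs \<Longrightarrow> set xs \<subseteq> S"
  unfolding walk_in_def by blast

lemma walk_Cons: "walk_in S E (x # xs) \<longleftrightarrow> x \<in> S \<and> (xs = [] \<or> (walk_in S E xs \<and> E x (hd xs)))"
proof (cases xs)
  case Nil then show ?thesis by (simp add: walk_in_def)
next
  case (Cons y ys)
  have "(\<forall>i. Suc i < length (x # y # ys) \<longrightarrow> E ((x # y # ys) ! i) ((x # y # ys) ! Suc i))
     \<longleftrightarrow> E x y \<and> (\<forall>i. Suc i < length (y # ys) \<longrightarrow> E ((y # ys) ! i) ((y # ys) ! Suc i))"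
    (is "?l \<longleftrightarrow> ?r")
  proof
    assume l: ?l
    show ?r
    proof (intro conjI allI impI)
      show "E x y" using l[rule_format, of 0] by simp
      fix i assume "Suc i < length (y # ys)"
      then show "E ((y # ys) ! i) ((y # ys) ! Suc i)" using l[rule_format, of "Suc i"] by simp
    qed
  next
    assume r: ?r
    show ?l
    proof (intro allI impI)
      fix i assume i: "Suc i < length (x # y # ys)"
      show "E ((x # y # ys) ! i) ((x # y # ys) ! Suc i)"
      proof (cases i)
        case 0 then show ?thesis using r by simp
      next
        case (Suc j) then show ?thesis using r i by simp
      qed
    qed
  qed
  note eq = this
  show ?thesis unfolding Cons walk_in_def eq list.sel(1) list.set(2) insert_subset by blast
qed

definition rel :: "'a set \<Rightarrow> ('a \<Rightarrow> 'a \<Rightarrow> bool) \<Rightarrow> 'a \<Rightarrow> 'a \<Rightarrow> bool" where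
  "rel S E a b \<longleftrightarrow> E a b \<and> a \<in> S \<and> b \<in> S"

lemma walk_rtrancl: "walk_in S E xs \<Longrightarrow> (rel S E)\<^sup>*\<^sup>* (hd xs) (last xs)"
proof (induction xs)
  case Nil then show ?case by (simp add: walk_in_def)
next
  case (Cons x xs)
  show ?case
  proof (cases "xs = []")
    case True then show ?thesis by simp
  next
    case False
    then have "walk_in S E xs" "E x (hd xs)" "x \<in> S" using Cons.prems False by (simp_all add: walk_Cons)
    moreover have "hd xs \<in> S" using walk_set[OF \<open>walk_in S E xs\<close>] False hd_in_set by blast
    ultimately show ?thesis using Cons.IH False
      by (auto intro: converse_rtranclp_into_rtranclp simp: rel_def)
  qed
qed

lemma rtrancl_reach: "(rel S E)\<^sup>*\<^sup>* x y \<Longrightarrow> x \<in> S \<Longrightarrow> reach_in S E x y"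
proof (induction rule: converse_rtranclp_induct)
  case base
  then show ?case unfolding reach_in_def by (intro exI[of _ "[y]"]) (simp add: walk_in_def)
next
  case (step a b)
  then have "b \<in> S" "E a b" by (auto simp: rel_def)
  with step obtain ys where ys: "walk_in S E ys" "hd ys = b" "last ys = y"
    unfolding reach_in_def by auto
  then have "ys \<noteq> []" by (simp add: walk_ne)
  then have "walk_in S E (a # ys)" using ys step \<open>E a b\<close> by (simp add: walk_Cons rel_def)
  then show ?case unfolding reach_in_def using ys \<open>ys \<noteq> []\<close> by (intro exI[of _ "a # ys"]) auto
qed

lemma reach_in_S: "reach_in S E x y \<Longrightarrow> y \<in> S"
  unfolding reach_in_def using walk_ne walk_set last_in_set by blast

lemma walk_Rset: "walk_in S E xs \<Longrightarrow> length xs = Suc k \<Longrightarrow> last xs \<in> Rset E (hd xs) k"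
proof (induction xs arbitrary: k)
  case Nil then show ?case by simp
next
  case (Cons x xs)
  show ?case
  proof (cases "xs = []")
    case True then show ?thesis using Cons by simp
  next
    case False
    then obtain k' where k: "k = Suc k'" "length xs = Suc k'" using Cons.prems by (cases xs) auto
    have "walk_in S E xs" "E x (hd xs)" using Cons.prems(1) False by (simp_all add: walk_Cons)
    then have "last xs \<in> Rset E (hd xs) k'" using Cons.IH k by auto
    then show ?thesis using Rset_step[of E x "hd xs" k'] \<open>E x (hd xs)\<close> k by auto
  qed
qed

lemma gdist_le: "walk_in V E xs \<Longrightarrow> hd xs = x \<Longrightarrow> last xs = y \<Longrightarrow> length xs = Suc n \<Longrightarrow> gdist V E x y \<le> n"
  unfolding gdist_def by (rule Least_le) blast

lemma gdist_real:
  assumes "connected_graph V E" "x \<in> V" "y \<in> V"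
  shows "\<exists>xs. walk_in V E xs \<and> hd xs = x \<and> last xs = y \<and> length xs = Suc (gdist V E x y)"
proof -
  obtain xs where xs: "walk_in V E xs" "hd xs = x" "last xs = y"
    using assms unfolding connected_graph_def reach_in_def by blast
  then have "xs \<noteq> []" by (simp add: walk_ne)
  then have "\<exists>n xs. walk_in V E xs \<and> hd xs = x \<and> last xs = y \<and> length xs = Suc n"
    using xs by (intro exI[of _ "length xs - 1"] exI[of _ xs]) auto
  then show ?thesis unfolding gdist_def by (rule LeastI_ex)
qed

lemma gdist_self: "x \<in> V \<Longrightarrow> gdist V E x x = 0"
  using gdist_le[of V E "[x]" x x 0] by (simp add: walk_in_def)

lemma gdist_edge: "E a b \<Longrightarrow> a \<in> V \<Longrightarrow> b \<in> V \<Longrightarrow> gdist V E a b \<le> 1"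
  by (rule gdist_le[of V E "[a,b]"]) (auto simp: walk_in_def less_Suc_eq)

lemma gdist_prefix:
  assumes "walk_in V E xs" "i < length xs"
  shows "gdist V E (hd xs) (xs ! i) \<le> i"
proof (rule gdist_le[of V E "take (Suc i) xs"])
  have e: "\<forall>j. Suc j < length xs \<longrightarrow> E (xs ! j) (xs ! Suc j)" using assms(1) unfolding walk_in_def by blast
  show "walk_in V E (take (Suc i) xs)" unfolding walk_in_def
  proof (intro conjI allI impI)
    show "take (Suc i) xs \<noteq> []" using assms(2) by auto
    show "set (take (Suc i) xs) \<subseteq> V" using walk_set[OF assms(1)] set_take_subset[of "Suc i" xs] by (rule order_trans[rotated])
    fix j assume j: "Suc j < length (take (Suc i) xs)"
    then have "Suc j < length xs" "j < Suc i" "Suc j < Suc i" by auto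
    then show "E (take (Suc i) xs ! j) (take (Suc i) xs ! Suc j)" using e by simp
  qed
  show "hd (take (Suc i) xs) = hd xs" by simp
  have "take (Suc i) xs \<noteq> []" using assms(2) by auto
  moreover have "length xs \<le> Suc i \<Longrightarrow> length xs - Suc 0 = i" using assms(2) by arith
  ultimately show "last (take (Suc i) xs) = xs ! i" using assms(2) by (auto simp: last_conv_nth min_def)
  show "length (take (Suc i) xs) = Suc i" using assms(2) by simp
qed

lemma gdist_Rset:
  assumes "connected_graph V E" "a \<in> V" "z \<in> V" "gdist V E a z \<le> n"
  shows "z \<in> Rset E a n"
proof -
  obtain xs where xs: "walk_in V E xs" "hd xs = a" "last xs = z" "length xs = Suc (gdist V E a z)"
    using gdist_real[OF assms(1-3)] by blast
  have "z \<in> Rset E a (gdist V E a z)" using walk_Rset[OF xs(1) xs(4)] xs(2,3) by simp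
  then show ?thesis using Rset_mono[OF assms(4), of E a] by blast
qed

lemma rtrancl_map:
  assumes "r\<^sup>*\<^sup>* x y" "\<And>a b. r a b \<Longrightarrow> s\<^sup>*\<^sup>* (f a) (f b)"
  shows "s\<^sup>*\<^sup>* (f x) (f y)"
  using assms(1) by induction (auto intro: rtranclp_trans assms(2))

lemma card_fibers:
  assumes "finite A" "\<And>z. z \<in> f ` A \<Longrightarrow> card {x\<in>A. f x = z} \<le> b"
  shows "card A \<le> card (f ` A) * b"
proof -
  have e: "A = (\<Union>z\<in>f ` A. {x\<in>A. f x = z})" by auto
  have "card (\<Union>z\<in>f ` A. {x\<in>A. f x = z}) \<le> (\<Sum>z\<in>f ` A. card {x\<in>A. f x = z})"
    by (rule card_UN_le) (use assms(1) in simp)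
  then have "card A \<le> (\<Sum>z\<in>f ` A. card {x\<in>A. f x = z})" by (simp only: e[symmetric])
  also have "\<dots> \<le> (\<Sum>z\<in>f ` A. b)" by (rule sum_mono) (use assms in auto)
  finally show ?thesis by simp
qed


lemma sum_swap_count:
  fixes w :: "'a \<Rightarrow> real"
  assumes "finite L" "finite S"
  shows "(\<Sum>z\<in>S. sum w {x\<in>L. P x z}) = (\<Sum>x\<in>L. w x * real (card {z\<in>S. P x z}))"
proof -
  have "(\<Sum>z\<in>S. sum w {x\<in>L. P x z}) = (\<Sum>z\<in>S. \<Sum>x\<in>L. if P x z then w x else 0)"
    by (rule sum.cong) (simp_all add: sum.inter_filter assms(1))
  also have "\<dots> = (\<Sum>x\<in>L. \<Sum>z\<in>S. if P x z then w x else 0)" by (rule sum.swap)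
  also have "\<dots> = (\<Sum>x\<in>L. w x * real (card {z\<in>S. P x z}))"
  proof (rule sum.cong)
    fix x assume "x \<in> L"
    have "(\<Sum>z\<in>S. if P x z then w x else 0) = (\<Sum>z\<in>{z\<in>S. P x z}. w x)"
      using sum.inter_filter[OF assms(2), of "\<lambda>_. w x" "P x"] by simp
    also have "\<dots> = w x * real (card {z\<in>S. P x z})" by simp
    finally show "(\<Sum>z\<in>S. if P x z then w x else 0) = w x * real (card {z\<in>S. P x z})" .
  qed simp
  finally show ?thesis .
qed

lemma walk_mono: "walk_in S E xs \<Longrightarrow> set xs \<subseteq> S' \<Longrightarrow> walk_in S' E xs"
  unfolding walk_in_def by blast

lemma reach_rtrancl: "reach_in S E x y \<Longrightarrow> (rel S E)\<^sup>*\<^sup>* x y"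
  unfolding reach_in_def using walk_rtrancl by blast

lemma reach_in_S1: "reach_in S E x y \<Longrightarrow> x \<in> S"
  unfolding reach_in_def using walk_ne walk_set hd_in_set by blast

theorem proposition3p1:
  fixes V1 :: "'a set" and E1 :: "'a \<Rightarrow> 'a \<Rightarrow> bool"
    and V2 :: "'b set" and E2 :: "'b \<Rightarrow> 'b \<Rightarrow> bool"
  assumes "is_graph V1 E1" "connected_graph V1 E1" "infinite V1" "bounded_degree V1 E1"
    and "is_graph V2 E2" "connected_graph V2 E2" "infinite V2" "bounded_degree V2 E2"
    and "quasi_isometric V1 E1 V2 E2"
    and "weighted_hyperfinite V2 E2"
  shows "weighted_hyperfinite V1 E1"
proof -
  note g1 = assms(1) and c1 = assms(2) and g2 = assms(5) and c2 = assms(6)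
  obtain D1 where D1: "\<forall>x\<in>V1. finite {y. E1 x y} \<and> card {y. E1 x y} \<le> D1"
    using assms(4) unfolding bounded_degree_def by blast
  obtain D2 where D2: "\<forall>x\<in>V2. finite {y. E2 x y} \<and> card {y. E2 x y} \<le> D2"
    using assms(8) unfolding bounded_degree_def by blast
  obtain \<iota> :: "'a \<Rightarrow> 'b" and c :: real where c: "c > 0" and iV: "\<iota> ` V1 \<subseteq> V2"
    and qi: "\<forall>x\<in>V1. \<forall>y\<in>V1. real (gdist V1 E1 x y) / c - c \<le> real (gdist V2 E2 (\<iota> x) (\<iota> y)) \<and>
         real (gdist V2 E2 (\<iota> x) (\<iota> y)) \<le> c * real (gdist V1 E1 x y) + c"
    using assms(9) unfolding quasi_isometric_def by blast
  have iV': "\<And>x. x \<in> V1 \<Longrightarrow> \<iota> x \<in> V2" using iV by blast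
  define R where "R = nat \<lceil>2*c\<rceil>"
  define r1 where "r1 = nat \<lfloor>c*c\<rfloor>"
  define B1 :: nat where "B1 = (D1+1)^r1"
  define B2 :: nat where "B2 = (D2+1)^R"
  have B1pos: "B1 \<ge> 1" and B2pos: "B2 \<ge> 1" by (simp_all add: B1_def B2_def)
  have ball2: "finite {z\<in>V2. gdist V2 E2 a z \<le> R} \<and> card {z\<in>V2. gdist V2 E2 a z \<le> R} \<le> B2"
    if a: "a \<in> V2" for a
  proof -
    have sub: "{z\<in>V2. gdist V2 E2 a z \<le> R} \<subseteq> Rset E2 a R" using gdist_Rset[OF c2 a] by blast
    have fc: "finite (Rset E2 a R)" "card (Rset E2 a R) \<le> B2" using Rset_card[OF g2 a D2] B2_def by auto
    show ?thesis using finite_subset[OF sub fc(1)] order_trans[OF card_mono[OF fc(1) sub] fc(2)] by blast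
  qed
  have ball1: "finite {z\<in>V1. gdist V1 E1 a z \<le> r1} \<and> card {z\<in>V1. gdist V1 E1 a z \<le> r1} \<le> B1"
    if a: "a \<in> V1" for a
  proof -
    have sub: "{z\<in>V1. gdist V1 E1 a z \<le> r1} \<subseteq> Rset E1 a r1" using gdist_Rset[OF c1 a] by blast
    have fc: "finite (Rset E1 a r1)" "card (Rset E1 a r1) \<le> B1" using Rset_card[OF g1 a D1] B1_def by auto
    show ?thesis using finite_subset[OF sub fc(1)] order_trans[OF card_mono[OF fc(1) sub] fc(2)] by blast
  qed
  show ?thesis unfolding weighted_hyperfinite_def
  proof (intro allI impI)
    fix \<epsilon> :: real assume \<epsilon>: "\<epsilon> > 0"
    have \<epsilon>': "\<epsilon> / real B2 > 0" using \<epsilon> B2pos by simp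
    obtain K' where K': "K' > 0" and HK: "\<forall>L w. finite L \<and> L \<subseteq> V2 \<and> (\<forall>x\<in>L. w x \<ge> (0::real)) \<longrightarrow>
        (\<exists>M\<subseteq>L. sum w M \<le> \<epsilon> / real B2 * sum w L \<and>
           (\<forall>x\<in>L - M. real (card {y. reach_in (L - M) E2 x y}) \<le> K'))"
      using assms(10)[unfolded weighted_hyperfinite_def, rule_format, OF \<epsilon>'] by blast
    show "\<exists>K>0. \<forall>L w. finite L \<and> L \<subseteq> V1 \<and> (\<forall>x\<in>L. 0 \<le> w x) \<longrightarrow>
        (\<exists>M\<subseteq>L. sum w M \<le> \<epsilon> * sum w L \<and>
           (\<forall>x\<in>L - M. real (card {y. reach_in (L - M) E1 x y}) \<le> K))"
    proof (intro exI[of _ "K' * real B1"] conjI allI impI)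
      show "K' * real B1 > 0" using K' B1pos by simp
      fix L and w :: "'a \<Rightarrow> real"
      assume "finite L \<and> L \<subseteq> V1 \<and> (\<forall>x\<in>L. 0 \<le> w x)"
      then have L: "finite L" "L \<subseteq> V1" and w0: "\<And>x. x\<in>L \<Longrightarrow> 0 \<le> w x" by auto
      define P where "P x z \<longleftrightarrow> gdist V2 E2 (\<iota> x) z \<le> R" for x z
      define L' where "L' = {z\<in>V2. \<exists>x\<in>L. P x z}"
      define w' where "w' z = sum w {x\<in>L. P x z}" for z
      have finL': "finite L'"
      proof -
        have "L' \<subseteq> (\<Union>x\<in>L. {z\<in>V2. gdist V2 E2 (\<iota> x) z \<le> R})" unfolding L'_def P_def by blast
        moreover have "finite (\<Union>x\<in>L. {z\<in>V2. gdist V2 E2 (\<iota> x) z \<le> R})"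
        proof (rule finite_UN_I)
          show "finite L" using L(1) .
          fix x assume "x \<in> L"
          then show "finite {z\<in>V2. gdist V2 E2 (\<iota> x) z \<le> R}" using ball2[OF iV'] L(2) by blast
        qed
        ultimately show ?thesis using finite_subset by blast
      qed
      have L'V: "L' \<subseteq> V2" unfolding L'_def by blast
      have w'0: "\<forall>z\<in>L'. 0 \<le> w' z" unfolding w'_def using w0 by (auto intro!: sum_nonneg)
      obtain M' where M'L: "M' \<subseteq> L'" and M'w: "sum w' M' \<le> \<epsilon> / real B2 * sum w' L'"
        and M'c: "\<forall>z\<in>L' - M'. real (card {y. reach_in (L' - M') E2 z y}) \<le> K'"
        using HK[rule_format, of L' w'] finL' L'V w'0 by blast
      have finM': "finite M'" using finite_subset[OF M'L finL'] .
      define M where "M = {x\<in>L. \<exists>z\<in>M'. P x z}"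
      show "\<exists>M\<subseteq>L. sum w M \<le> \<epsilon> * sum w L \<and>
           (\<forall>x\<in>L - M. real (card {y. reach_in (L - M) E1 x y}) \<le> K' * real B1)"
      proof (intro exI[of _ M] conjI)
        show hML: "M \<subseteq> L" unfolding M_def by blast
        have lower: "sum w M \<le> sum w' M'"
        proof -
          have "sum w M \<le> (\<Sum>x\<in>M. w x * real (card {z\<in>M'. P x z}))"
          proof (rule sum_mono)
            fix x assume x: "x \<in> M"
            then have "{z\<in>M'. P x z} \<noteq> {}" unfolding M_def by blast
            then have "card {z\<in>M'. P x z} \<ge> 1" using finM'
              by (simp add: Suc_le_eq card_gt_0_iff)
            then have "w x * 1 \<le> w x * real (card {z\<in>M'. P x z})"
              using w0 x hML by (intro mult_left_mono) auto
            then show "w x \<le> w x * real (card {z\<in>M'. P x z})" by simp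
          qed
          also have "\<dots> \<le> (\<Sum>x\<in>L. w x * real (card {z\<in>M'. P x z}))"
            using L(1) hML w0 by (intro sum_mono2) auto
          also have "\<dots> = sum w' M'" unfolding w'_def using sum_swap_count[OF L(1) finM'] by simp
          finally show ?thesis .
        qed
        have upper: "sum w' L' \<le> real B2 * sum w L"
        proof -
          have "sum w' L' = (\<Sum>x\<in>L. w x * real (card {z\<in>L'. P x z}))"
            unfolding w'_def using sum_swap_count[OF L(1) finL'] by simp
          also have "\<dots> \<le> (\<Sum>x\<in>L. w x * real B2)"
          proof (rule sum_mono)
            fix x assume x: "x \<in> L"
            have "{z\<in>L'. P x z} \<subseteq> {z\<in>V2. gdist V2 E2 (\<iota> x) z \<le> R}" unfolding L'_def P_def by blast
            moreover have "finite {z\<in>V2. gdist V2 E2 (\<iota> x) z \<le> R}" "card {z\<in>V2. gdist V2 E2 (\<iota> x) z \<le> R} \<le> B2"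
              using ball2[OF iV'] x L(2) by auto
            ultimately have "card {z\<in>L'. P x z} \<le> B2" by (meson card_mono order_trans)
            then show "w x * real (card {z\<in>L'. P x z}) \<le> w x * real B2"
              using w0[OF x] by (intro mult_left_mono) auto
          qed
          also have "\<dots> = real B2 * sum w L" using sum_distrib_left[of "real B2" w L] by (simp add: mult.commute)
          finally show ?thesis .
        qed
        have "sum w M \<le> \<epsilon> / real B2 * sum w' L'" using lower M'w by linarith
        also have "\<dots> \<le> \<epsilon> / real B2 * (real B2 * sum w L)"
          using upper \<epsilon>' by (intro mult_left_mono) auto
        also have "\<dots> = \<epsilon> * sum w L" using B2pos by simp
        finally show "sum w M \<le> \<epsilon> * sum w L" .
        show "\<forall>x\<in>L - M. real (card {y. reach_in (L - M) E1 x y}) \<le> K' * real B1"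
        proof
          fix x assume x: "x \<in> L - M"
          define C where "C = {y. reach_in (L - M) E1 x y}"
          define C' where "C' = {z. reach_in (L' - M') E2 (\<iota> x) z}"
          have xV: "x \<in> V1" using x L(2) by blast
          have ixL: "\<iota> x \<in> L' - M'"
          proof -
            have "P x (\<iota> x)" unfolding P_def using gdist_self[OF iV'[OF xV]] by simp
            then show ?thesis using x iV'[OF xV] unfolding L'_def M_def by blast
          qed
          have edge: "(rel (L' - M') E2)\<^sup>*\<^sup>* (\<iota> a) (\<iota> b)" if ab: "rel (L - M) E1 a b" for a b
          proof -
            have ab': "E1 a b" "a \<in> L - M" "b \<in> L - M" using ab unfolding rel_def by auto
            then have aV: "a \<in> V1" and bV: "b \<in> V1" using L(2) by auto
            have g1: "gdist V1 E1 a b \<le> 1" using gdist_edge[of E1 a b V1] ab'(1) aV bV by blast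
            have "real (gdist V2 E2 (\<iota> a) (\<iota> b)) \<le> c * real (gdist V1 E1 a b) + c"
              using qi aV bV by blast
            moreover have "c * real (gdist V1 E1 a b) \<le> c * 1"
              using g1 c by (intro mult_left_mono) auto
            ultimately have "real (gdist V2 E2 (\<iota> a) (\<iota> b)) \<le> 2 * c" by linarith
            then have gR: "gdist V2 E2 (\<iota> a) (\<iota> b) \<le> R"
              using real_nat_ceiling_ge[of "2*c"] unfolding R_def by linarith
            obtain xs where xs: "walk_in V2 E2 xs" "hd xs = \<iota> a" "last xs = \<iota> b"
              "length xs = Suc (gdist V2 E2 (\<iota> a) (\<iota> b))"
              using gdist_real[OF c2 iV'[OF aV] iV'[OF bV]] by blast
            have "set xs \<subseteq> L' - M'"
            proof
              fix v assume "v \<in> set xs"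
              then obtain i where i: "i < length xs" "v = xs ! i" unfolding in_set_conv_nth by blast
              have "gdist V2 E2 (\<iota> a) v \<le> i" using gdist_prefix[OF xs(1) i(1)] xs(2) i(2) by simp
              then have Pv: "P a v" unfolding P_def using i(1) xs(4) gR by simp
              have vV: "v \<in> V2" using walk_set[OF xs(1)] i nth_mem by blast
              show "v \<in> L' - M'" using Pv vV ab'(2) unfolding L'_def M_def by blast
            qed
            then have "walk_in (L' - M') E2 xs" using walk_mono[OF xs(1)] by blast
            then show ?thesis using walk_rtrancl[of "L' - M'" E2 xs] xs(2,3) by simp
          qed
          have CC': "\<iota> ` C \<subseteq> C'"
          proof
            fix z assume "z \<in> \<iota> ` C"
            then obtain y where y: "y \<in> C" "z = \<iota> y" by blast
            have "(rel (L - M) E1)\<^sup>*\<^sup>* x y" using y(1) unfolding C_def mem_Collect_eq by (rule reach_rtrancl)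
            then have "(rel (L' - M') E2)\<^sup>*\<^sup>* (\<iota> x) (\<iota> y)" by (rule rtrancl_map) (rule edge)
            then have "reach_in (L' - M') E2 (\<iota> x) (\<iota> y)" using ixL by (rule rtrancl_reach)
            then show "z \<in> C'" unfolding C'_def using y(2) by simp
          qed
          have CLM: "C \<subseteq> L - M" unfolding C_def using reach_in_S[of "L - M" E1 x] by blast
          have finC: "finite C" using finite_subset[OF CLM] L(1) by simp
          have "C' \<subseteq> L' - M'" unfolding C'_def using reach_in_S[of "L' - M'" E2 "\<iota> x"] by blast
          then have finC': "finite C'" using finite_subset finL' by blast
          have fib: "card {y\<in>C. \<iota> y = z} \<le> B1" if z: "z \<in> \<iota> ` C" for z
          proof -
            obtain y0 where y0: "y0 \<in> C" "\<iota> y0 = z" using z by blast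
            have y0V: "y0 \<in> V1" using y0(1) CLM L(2) by blast
            have "{y\<in>C. \<iota> y = z} \<subseteq> {y\<in>V1. gdist V1 E1 y0 y \<le> r1}"
            proof
              fix y assume y: "y \<in> {y\<in>C. \<iota> y = z}"
              then have yV: "y \<in> V1" and iy: "\<iota> y = z" using CLM L(2) by auto
              have "real (gdist V1 E1 y0 y) / c - c \<le> real (gdist V2 E2 (\<iota> y0) (\<iota> y))"
                using qi y0V yV by blast
              moreover have "gdist V2 E2 (\<iota> y0) (\<iota> y) = 0"
                using gdist_self[OF iV'[OF yV]] y0(2) iy by simp
              ultimately have "real (gdist V1 E1 y0 y) / c \<le> c" by simp
              then have "real (gdist V1 E1 y0 y) \<le> c * c" using c by (simp add: divide_le_eq)
              then have "int (gdist V1 E1 y0 y) \<le> \<lfloor>c*c\<rfloor>" by (simp add: le_floor_iff)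
              then have "gdist V1 E1 y0 y \<le> r1" unfolding r1_def by linarith
              then show "y \<in> {y\<in>V1. gdist V1 E1 y0 y \<le> r1}" using yV by blast
            qed
            then show ?thesis using ball1[OF y0V] by (meson card_mono order_trans)
          qed
          have "card C \<le> card (\<iota> ` C) * B1" using card_fibers[OF finC fib] by blast
          also have "\<dots> \<le> card C' * B1" using card_mono[OF finC' CC'] by simp
          finally have "real (card C) \<le> real (card C' * B1)" by (simp only: of_nat_le_iff)
          also have "\<dots> = real (card C') * real B1" by simp
          also have "\<dots> \<le> K' * real B1" using M'c ixL unfolding C'_def by (intro mult_right_mono) auto
          finally show "real (card {y. reach_in (L - M) E1 x y}) \<le> K' * real B1" unfolding C_def .
        qed
      qed
    qed
  qed
qed

end
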